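(* Let $K(\mathbf x)$ and $M(\mathbf x)$ be real symmetric positive definite $n\times n$ matrices depending in a $\mathcal C^2$ way on $\mathbf x=(x_1,\dots,x_\ell)\in\mathbb R^\ell$, fix $\mathbf x^{(0)}$, and write $K_0=K(\mathbf x^{(0)})$, $M_0=M(\mathbf x^{(0)})$. Let $U\in\mathbb R^{n\times m}$ satisfy $U^T M_0 U = I_m$, set $Z(\mathbf x):=U^TM(\mathbf x)U$, $U_{m,0}(\mathbf x):=UZ(\mathbf x)^{-1/2}$ and $$F_0(\mathbf x) := U_{m,0}(\mathbf x)^T M(\mathbf x)K(\mathbf x)^{-1}M(\mathbf x)U_{m,0}(\mathbf x).$$ Define $T_m := U^T M_0 K_0^{-1} M_0 U$, $$\hat Z(\mathbf x) := I_m + \sum_{j=1}^\ell (x_j-x_j^{(0)})\, U^T \frac{\partial M(\mathbf x^{(0)})}{\partial x_j} U,$$ $$G_j := \frac{\partial M(\mathbf x^{(0)})}{\partial x_j}K_0^{-1}M_0 - M_0K_0^{-1}\frac{\partial K(\mathbf x^{(0)})}{\partial x_j}K_0^{-1}M_0 + M_0K_0^{-1}\frac{\partial M(\mathbf x^{(0)})}{\partial x_j},$$ $\hat G_j(\mathbf x) := Z(\mathbf x)^{-1/2}U^TG_jUZ(\mathbf x)^{-1/2}$, and $$F_{m,0}(\mathbf x) := \hat Z(\mathbf x)^{-1/2}\, T_m\, \hat Z(\mathbf x)^{-1/2} + \sum_{j=1}^\ell (x_j-x_j^{(0)})\hat G_j(\mathbf x).$$ Then there exists a neighborhood $\mathcal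 N$ of $\mathbf x^{(0)}$ (on which $Z(\mathbf x)$ and $\hat Z(\mathbf x)$ are positive definite) such that $$F_0(\mathbf x) = F_{m,0}(\mathbf x) + O(\|\mathbf x-\mathbf x^{(0)}\|^2),\qquad \mathbf x\in\mathcal N.$$
   Context: $U$ is the $M_0$-orthogonal basis obtained by the inverse Lanczos process applied at $\mathbf x^{(0)}$ to the pencil $K-\lambda M$, and $T_m$ is the corresponding tridiagonal projected matrix. $F_0(\mathbf x)$ is the projection of $M(\mathbf x)K(\mathbf x)^{-1}M(\mathbf x)$ onto the fixed subspace spanned by $U$, using an $M(\mathbf x)$-orthonormal basis of it; $F_{m,0}$ is a cheap reduced model built only from small $m\times m$ matrices precomputed at $\mathbf x^{(0)}$. *)

theory Defs
  imports "HOL-Analysis.Analysis"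
begin

definition spd :: "real^'n^'n \<Rightarrow> bool" where
  "spd A \<longleftrightarrow> transpose A = A \<and> (\<forall>v. v \<noteq> 0 \<longrightarrow> v \<bullet> (A *v v) > 0)"

definition msqrt :: "real^'n^'n \<Rightarrow> real^'n^'n" where
  "msqrt A = (THE S. spd S \<and> S ** S = A)"

definition isqrt :: "real^'n^'n \<Rightarrow> real^'n^'n" where
  "isqrt A = matrix_inv (msqrt A)"

definition C2 :: "(real^'l \<Rightarrow> 'a::real_normed_vector) \<Rightarrow> bool" where
  "C2 f \<longleftrightarrow> (\<exists>D :: real^'l \<Rightarrow> ((real^'l) \<Rightarrow>\<^sub>L 'a). \<exists>D2 :: real^'l \<Rightarrow> ((real^'l) \<Rightarrow>\<^sub>L ((real^'l) \<Rightarrow>\<^sub>L 'a)).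
     (\<forall>x. (f has_derivative blinfun_apply (D x)) (at x)) \<and>
     (\<forall>x. (D has_derivative blinfun_apply (D2 x)) (at x)) \<and>
     continuous_on UNIV D2)"

definition pderiv_at :: "(real^'l \<Rightarrow> 'a::real_normed_vector) \<Rightarrow> 'l \<Rightarrow> real^'l \<Rightarrow> 'a" where
  "pderiv_at f j x = frechet_derivative f (at x) (axis j 1)"

end

theory Submission
  imports Defs
begin


lemma mv_row: "(A *v x) $ i = inner (A $ i) (x::real^'a)"
  by (simp add: matrix_vector_mult_def inner_vec_def mult.commute)

lemma norm_sq_vec: "(norm (x::'b::real_inner^'a))\<^sup>2 = (\<Sum>i\<in>UNIV. (norm (x $ i))\<^sup>2)"
  by (simp add: power2_norm_eq_inner inner_vec_def)

lemma norm_mv: "norm (A *v x) \<le> norm (A::real^'a^'b) * norm x"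
proof -
  have "(norm (A *v x))\<^sup>2 = (\<Sum>i\<in>UNIV. (inner (A $ i) x)\<^sup>2)"
    by (simp add: norm_sq_vec mv_row)
  also have "\<dots> \<le> (\<Sum>i\<in>UNIV. (norm (A $ i))\<^sup>2 * (norm x)\<^sup>2)"
  proof (rule sum_mono)
    fix i
    have "\<bar>inner (A $ i) x\<bar> \<le> norm (A $ i) * norm x" by (rule Cauchy_Schwarz_ineq2)
    then have "\<bar>inner (A $ i) x\<bar>\<^sup>2 \<le> (norm (A $ i) * norm x)\<^sup>2"
      by (metis abs_ge_zero power2_abs power_mono)
    then show "(inner (A $ i) x)\<^sup>2 \<le> (norm (A $ i))\<^sup>2 * (norm x)\<^sup>2"
      by (simp add: power_mult_distrib)
  qed
  also have "\<dots> = ((norm A) * norm x)\<^sup>2"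
    by (simp add: norm_sq_vec[of A] power_mult_distrib sum_distrib_right)
  finally show ?thesis
    by (meson mult_nonneg_nonneg norm_ge_zero power2_le_imp_le)
qed

lemma mm_row: "((A::real^'a^'b) ** (B::real^'c^'a)) $ i = transpose B *v (A $ i)"
  by (simp add: matrix_matrix_mult_def matrix_vector_mult_def transpose_def vec_eq_iff mult.commute)

lemma norm_transpose: "norm (transpose (A::real^'a^'b)) = norm A"
proof -
  have "(norm (transpose A))\<^sup>2 = (norm A)\<^sup>2"
    unfolding norm_sq_vec[of A] norm_sq_vec[of "transpose A"]
    by (simp add: norm_sq_vec transpose_def) (rule sum.swap)
  then show ?thesis by (simp add: power2_eq_iff_nonneg)
qed

lemma norm_mm: "norm (A ** B) \<le> norm (A::real^'a^'b) * norm (B::real^'c^'a)"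
proof -
  have "(norm (A ** B))\<^sup>2 = (\<Sum>i\<in>UNIV. (norm (transpose B *v (A $ i)))\<^sup>2)"
    by (simp add: norm_sq_vec[of "A ** B"] mm_row)
  also have "\<dots> \<le> (\<Sum>i\<in>UNIV. (norm B)\<^sup>2 * (norm (A $ i))\<^sup>2)"
  proof (rule sum_mono)
    fix i
    have "norm (transpose B *v (A $ i)) \<le> norm B * norm (A $ i)"
      using norm_mv[of "transpose B" "A $ i"] by (simp add: norm_transpose)
    then show "(norm (transpose B *v (A $ i)))\<^sup>2 \<le> (norm B)\<^sup>2 * (norm (A $ i))\<^sup>2"
      by (metis norm_ge_zero power_mono power_mult_distrib)
  qed
  also have "\<dots> = (norm A * norm B)\<^sup>2"
    by (simp add: norm_sq_vec[of A] power_mult_distrib sum_distrib_left mult.commute)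
  finally show ?thesis
    by (meson mult_nonneg_nonneg norm_ge_zero power2_le_imp_le)
qed

lemma quad_bound: "\<bar>inner x (A *v x)\<bar> \<le> norm (A::real^'a^'a) * (norm x)\<^sup>2"
proof -
  have "\<bar>inner x (A *v x)\<bar> \<le> norm x * norm (A *v x)" by (rule Cauchy_Schwarz_ineq2)
  also have "\<dots> \<le> norm x * (norm A * norm x)" by (simp add: mult_left_mono norm_mv)
  finally show ?thesis by (simp add: power2_eq_square mult_ac)
qed



lemma mm_diff_left: "((A::real^'a^'b) - B) ** (C::real^'c^'a) = A ** C - B ** C"
  by (simp add: matrix_matrix_mult_def vec_eq_iff algebra_simps sum_subtractf)
lemma mm_diff_right: "(A::real^'a^'b) ** ((B::real^'c^'a) - C) = A ** B - A ** C"
  by (simp add: matrix_matrix_mult_def vec_eq_iff algebra_simps sum_subtractf)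
lemma mm_add_left: "((A::real^'a^'b) + B) ** (C::real^'c^'a) = A ** C + B ** C"
  by (simp add: matrix_matrix_mult_def vec_eq_iff algebra_simps sum.distrib)
lemma mm_add_right: "(A::real^'a^'b) ** ((B::real^'c^'a) + C) = A ** B + A ** C"
  by (simp add: matrix_matrix_mult_def vec_eq_iff algebra_simps sum.distrib)
lemma mm_scale_left: "(r *\<^sub>R (A::real^'a^'b)) ** (C::real^'c^'a) = r *\<^sub>R (A ** C)"
  by (simp add: matrix_matrix_mult_def vec_eq_iff algebra_simps sum_distrib_left)
lemma mm_scale_right: "(A::real^'a^'b) ** (r *\<^sub>R (C::real^'c^'a)) = r *\<^sub>R (A ** C)"
  by (simp add: matrix_matrix_mult_def vec_eq_iff algebra_simps sum_distrib_left)
lemma mm_zero_left[simp]: "(0::real^'a^'b) ** (C::real^'c^'a) = 0"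
  by (simp add: matrix_matrix_mult_def vec_eq_iff)
lemma mm_zero_right[simp]: "(A::real^'a^'b) ** (0::real^'c^'a) = 0"
  by (simp add: matrix_matrix_mult_def vec_eq_iff)
lemma mm_sum_left: "(sum f S) ** (C::real^'c^'a) = (\<Sum>j\<in>S. (f j::real^'a^'b) ** C)"
  by (induct S rule: infinite_finite_induct) (auto simp: mm_add_left)
lemma mm_sum_right: "(C::real^'a^'b) ** (sum f S) = (\<Sum>j\<in>S. C ** (f j::real^'c^'a))"
  by (induct S rule: infinite_finite_induct) (auto simp: mm_add_right)

lemma transpose_diff: "transpose ((A::real^'a^'b) - B) = transpose A - transpose B"
  by (simp add: transpose_def vec_eq_iff)
lemma transpose_add: "transpose ((A::real^'a^'b) + B) = transpose A + transpose B"
  by (simp add: transpose_def vec_eq_iff)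
lemma transpose_sum: "transpose (sum (f::_\<Rightarrow>real^'a^'b) S) = (\<Sum>j\<in>S. transpose (f j))"
  by (induct S rule: infinite_finite_induct) (auto simp: transpose_add transpose_def vec_eq_iff)

lemma inner_transpose: "inner (transpose (X::real^'a^'b)) (transpose Y) = inner X Y"
  by (simp add: inner_vec_def transpose_def) (rule sum.swap)

lemma inner_mv_transpose: "inner x ((A::real^'a^'b) *v y) = inner (transpose A *v x) y"
  by (simp add: dot_lmul_matrix)

lemma inv_facts:
  assumes "invertible (A::real^'n^'n)"
  shows "A ** matrix_inv A = mat 1" "matrix_inv A ** A = mat 1"
proof -
  have "\<exists>A'. A ** A' = mat 1 \<and> A' ** A = mat 1" using assms by (simp add: invertible_def)
  then have "A ** matrix_inv A = mat 1 \<and> matrix_inv A ** A = mat 1"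
    unfolding matrix_inv_def by (rule someI_ex)
  then show "A ** matrix_inv A = mat 1" "matrix_inv A ** A = mat 1" by auto
qed

lemma pos_invertible:
  assumes "\<And>v. v \<noteq> 0 \<Longrightarrow> inner v ((S::real^'n^'n) *v v) > 0"
  shows "invertible S"
proof -
  have "\<forall>x. S *v x = 0 \<longrightarrow> x = 0" using assms by force
  then obtain B where "B ** S = mat 1" using matrix_left_invertible_ker by blast
  then show ?thesis unfolding invertible_def using matrix_left_right_inverse by blast
qed

lemma inv_sym:
  assumes "invertible (S::real^'n^'n)" "transpose S = S"
  shows "transpose (matrix_inv S) = matrix_inv S"
proof -
  let ?X = "matrix_inv S"
  have "transpose ?X ** S = mat 1"
    using inv_facts(1)[OF assms(1)] matrix_transpose_mul[of S ?X] assms(2) by simp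
  then have "transpose ?X = transpose ?X ** (S ** ?X)" using inv_facts(1)[OF assms(1)] by simp
  also have "\<dots> = ?X" by (simp add: matrix_mul_assoc \<open>transpose ?X ** S = mat 1\<close>)
  finally show ?thesis .
qed

lemma row_axis: "transpose (X::real^'n^'m) *v axis i 1 = X $ i"
  proof -
  have "(\<Sum>k\<in>UNIV. (if k = i then 1 else 0) * X $ k $ j) = X $ i $ j" for j
    by (simp add: if_distrib[of "\<lambda>x. x * _"] cong: if_cong)
  then show ?thesis by (simp add: vec_eq_iff vector_matrix_mult_def axis_def if_distrib[of "\<lambda>f. f _"] cong: if_cong)
qed

lemma norm_le_rows: "norm (X::real^'n^'m) \<le> (\<Sum>i\<in>UNIV. norm (X $ i))"
  unfolding norm_vec_def by (rule L2_set_le_sum) auto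

lemma inv_bound:
  assumes c: "c > 0" and pos: "\<And>v. inner v ((S::real^'n^'n) *v v) \<ge> c * (norm v)\<^sup>2"
    and sym: "transpose S = S"
  shows "invertible S" "transpose (matrix_inv S) = matrix_inv S"
    "norm (matrix_inv S) \<le> real CARD('n) / c"
proof -
  show inv: "invertible S"
  proof (rule pos_invertible)
    fix v :: "real^'n" assume "v \<noteq> 0"
    then have "c * (norm v)\<^sup>2 > 0" using c by simp
    then show "inner v (S *v v) > 0" using pos[of v] by linarith
  qed
  show symi: "transpose (matrix_inv S) = matrix_inv S" by (rule inv_sym[OF inv sym])
  have wb: "norm (matrix_inv S *v w) \<le> norm w / c" for w
  proof -
    let ?u = "matrix_inv S *v w"
    have "S *v ?u = w" using inv_facts(1)[OF inv] by (simp add: matrix_vector_mul_assoc)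
    then have "c * (norm ?u)\<^sup>2 \<le> inner ?u w" using pos[of ?u] by simp
    also have "\<dots> \<le> norm ?u * norm w" by (rule Cauchy_Schwarz_ineq2[THEN order_trans[OF abs_ge_self]])
    finally have "c * (norm ?u)\<^sup>2 \<le> norm ?u * norm w" .
    then have "c * norm ?u \<le> norm w"
      by (cases "norm ?u = 0") (auto simp: power2_eq_square mult_ac)
    then show ?thesis using c by (simp add: field_simps)
  qed
  have "norm (matrix_inv S) \<le> (\<Sum>i\<in>UNIV. norm (matrix_inv S $ i))" by (rule norm_le_rows)
  also have "\<dots> \<le> (\<Sum>i\<in>(UNIV::'n set). 1 / c)"
  proof (rule sum_mono)
    fix i
    have "matrix_inv S $ i = matrix_inv S *v axis i 1"
      using row_axis[of "matrix_inv S" i] symi by simp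
    then show "norm (matrix_inv S $ i) \<le> 1 / c" using wb[of "axis i 1"] by simp
  qed
  finally show "norm (matrix_inv S) \<le> real CARD('n) / c" by simp
qed



lemma quad_sum_right: "inner D ((D::real^'n^'m) ** (T::real^'n^'n)) = (\<Sum>i\<in>UNIV. inner (D $ i) (transpose T *v (D $ i)))"
  by (simp add: inner_vec_def mm_row)

lemma quad_sum_left: "inner D ((S::real^'n^'n) ** (D::real^'m^'n)) = (\<Sum>i\<in>UNIV. inner (transpose D $ i) (S *v (transpose D $ i)))"
proof -
  have "inner D (S ** D) = inner (transpose D) (transpose (S ** D))" by (simp add: inner_transpose)
  also have "\<dots> = inner (transpose D) (transpose D ** transpose S)" by (simp add: matrix_transpose_mul)
  also have "\<dots> = (\<Sum>i\<in>UNIV. inner (transpose D $ i) (S *v (transpose D $ i)))"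
    using quad_sum_right[of "transpose D" "transpose S"] by simp
  finally show ?thesis .
qed

lemma sylv_id: "(S::real^'n^'n) ** (S - T) + (S - T) ** T = S ** S - T ** T"
  by (simp add: mm_diff_left mm_diff_right)

lemma sqrt_lip:
  fixes S T :: "real^'n^'n"
  assumes sS: "transpose S = S" and sT: "transpose T = T"
    and pS: "\<And>v. inner v (S *v v) \<ge> c * (norm v)\<^sup>2" and pT: "\<And>v. inner v (T *v v) \<ge> c * (norm v)\<^sup>2"
  shows "2 * c * norm (S - T) \<le> norm (S ** S - T ** T)"
proof -
  let ?D = "S - T"
  have sD: "transpose ?D = ?D" using sS sT by (simp add: transpose_diff)
  have nD: "(norm ?D)\<^sup>2 = (\<Sum>i\<in>UNIV. (norm (?D $ i))\<^sup>2)" by (rule norm_sq_vec)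
  have "inner ?D (S ** ?D) = (\<Sum>i\<in>UNIV. inner (?D $ i) (S *v (?D $ i)))"
    using quad_sum_left[of ?D S] sD by simp
  also have "\<dots> \<ge> (\<Sum>i\<in>UNIV. c * (norm (?D $ i))\<^sup>2)" by (rule sum_mono) (rule pS)
  finally have 1: "inner ?D (S ** ?D) \<ge> c * (norm ?D)\<^sup>2" by (simp add: nD sum_distrib_left)
  have "inner ?D (?D ** T) = (\<Sum>i\<in>UNIV. inner (?D $ i) (T *v (?D $ i)))"
    using quad_sum_right[of ?D T] sT by (simp del: transpose_matrix_vector)
  also have "\<dots> \<ge> (\<Sum>i\<in>UNIV. c * (norm (?D $ i))\<^sup>2)" by (rule sum_mono) (rule pT)
  finally have 2: "inner ?D (?D ** T) \<ge> c * (norm ?D)\<^sup>2" by (simp add: nD sum_distrib_left)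
  have "inner ?D (S ** S - T ** T) = inner ?D (S ** ?D) + inner ?D (?D ** T)"
    by (simp only: sylv_id[symmetric] inner_add_right)
  then have "2 * c * (norm ?D)\<^sup>2 \<le> inner ?D (S ** S - T ** T)" using 1 2 by simp
  also have "\<dots> \<le> norm ?D * norm (S ** S - T ** T)" by (rule Cauchy_Schwarz_ineq2[THEN order_trans[OF abs_ge_self]])
  finally have "2 * c * (norm ?D)\<^sup>2 \<le> norm ?D * norm (S ** S - T ** T)" .
  then show ?thesis
    by (cases "norm ?D = 0") (auto simp: power2_eq_square mult_ac)
qed

lemma spd_nonneg: "spd S \<Longrightarrow> inner v (S *v v) \<ge> 0"
  unfolding spd_def by (cases "v = 0") (auto intro: less_imp_le)

lemma spd_unique:
  assumes "spd S" "spd T" "S ** S = T ** T"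
  shows "S = T"
proof -
  let ?D = "S - T"
  have sS: "transpose S = S" and sT: "transpose T = T" using assms unfolding spd_def by auto
  have sD: "transpose ?D = ?D" using sS sT by (simp add: transpose_diff)
  have e1: "inner ?D (S ** ?D) = (\<Sum>i\<in>UNIV. inner (?D $ i) (S *v (?D $ i)))"
    using quad_sum_left[of ?D S] sD by simp
  have e2: "inner ?D (?D ** T) = (\<Sum>i\<in>UNIV. inner (?D $ i) (T *v (?D $ i)))"
    using quad_sum_right[of ?D T] sT by (simp del: transpose_matrix_vector)
  have "inner ?D (S ** ?D) + inner ?D (?D ** T) = inner ?D (S ** S - T ** T)"
    by (simp only: sylv_id[symmetric] inner_add_right)
  then have "inner ?D (S ** ?D) + inner ?D (?D ** T) = 0" using assms(3) by simp
  moreover have "inner ?D (S ** ?D) \<ge> 0" "inner ?D (?D ** T) \<ge> 0"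
    unfolding e1 e2 using spd_nonneg assms by (auto intro: sum_nonneg)
  ultimately have "(\<Sum>i\<in>UNIV. inner (?D $ i) (S *v (?D $ i))) = 0" using e1 by linarith
  then have "\<forall>i\<in>UNIV. inner (?D $ i) (S *v (?D $ i)) = 0"
    by (subst (asm) sum_nonneg_eq_0_iff) (auto intro: spd_nonneg assms)
  then have "\<forall>i. ?D $ i = 0" using assms(1) unfolding spd_def by (metis UNIV_I less_irrefl)
  then have "?D = 0" by (simp add: vec_eq_iff)
  then show ?thesis by simp
qed

lemma bl_transpose: "bounded_linear (transpose :: real^'a^'b \<Rightarrow> real^'b^'a)"
  by (rule bounded_linear_intro[where K=1]) (auto simp: transpose_add transpose_scalar norm_transpose)

lemma sqrt_exists:
  fixes A :: "real^'n^'n"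
  assumes sA: "transpose A = A" and nA: "norm (A - mat 1) \<le> 1/4"
  shows "\<exists>R. transpose R = R \<and> norm R \<le> 1/2 \<and> (mat 1 + R) ** (mat 1 + R) = A"
proof -
  let ?E = "A - mat 1"
  define Sset where "Sset = {R::real^'n^'n. transpose R = R} \<inter> cball 0 (1/2)"
  define f where "f R = (1/2) *\<^sub>R (?E - R ** R)" for R :: "real^'n^'n"
  have sE: "transpose ?E = ?E" by (metis sA transpose_diff transpose_mat)
  have cl: "closed Sset" unfolding Sset_def
    by (intro closed_Int closed_Collect_eq closed_cball continuous_on_id
        linear_continuous_on bl_transpose)
  have "0 \<in> Sset" unfolding Sset_def by (simp add: transpose_def vec_eq_iff)
  have mapsto: "f ` Sset \<subseteq> Sset"
  proof
    fix Y assume "Y \<in> f ` Sset"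
    then obtain R where R: "R \<in> Sset" and Y: "Y = f R" by auto
    have sR: "transpose R = R" and nR: "norm R \<le> 1/2" using R by (auto simp: Sset_def)
    have "transpose Y = Y" unfolding Y f_def
      by (simp add: transpose_scalar transpose_diff sA matrix_transpose_mul sR)
    moreover have "norm Y \<le> 1/2"
    proof -
      have "norm (R ** R) \<le> norm R * norm R" by (rule norm_mm)
      also have "\<dots> \<le> 1/4" using mult_mono[OF nR nR] by (simp add: norm_ge_zero)
      finally have "norm (?E - R ** R) \<le> 1/2" using nA norm_triangle_ineq4[of ?E "R ** R"] by linarith
      then show ?thesis unfolding Y f_def by simp
    qed
    ultimately show "Y \<in> Sset" by (simp add: Sset_def)
  qed
  have lip: "dist (f x) (f y) \<le> 1/2 * dist x y" if "x \<in> Sset" "y \<in> Sset" for x y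
  proof -
    have nx: "norm x \<le> 1/2" and ny: "norm y \<le> 1/2" using that by (auto simp: Sset_def)
    have eq: "f x - f y = (1/2) *\<^sub>R (y ** (y - x) + (y - x) ** x)"
      unfolding f_def by (simp add: mm_diff_left mm_diff_right algebra_simps)
    have "norm (y ** (y - x) + (y - x) ** x) \<le> norm y * norm (y - x) + norm (y - x) * norm x"
      by (rule order_trans[OF norm_triangle_ineq add_mono[OF norm_mm norm_mm]])
    also have "\<dots> \<le> 1/2 * norm (y - x) + norm (y - x) * (1/2)"
      by (intro add_mono mult_right_mono mult_left_mono nx ny) auto
    finally have "norm (y ** (y - x) + (y - x) ** x) \<le> norm (x - y)" by (simp add: norm_minus_commute)
    then show ?thesis by (simp add: dist_norm eq)
  qed
  have "complete Sset" using cl by (simp add: complete_eq_closed)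
  moreover have "Sset \<noteq> {}" using \<open>0 \<in> Sset\<close> by blast
  ultimately have "\<exists>!x\<in>Sset. f x = x"
    by (rule Banach_fix[where c="1/2"]) (use mapsto lip in auto)
  then obtain R where R: "R \<in> Sset" "f R = R" by blast
  have "(mat 1 + R) ** (mat 1 + R) = mat 1 + 2 *\<^sub>R R + R ** R"
    by (simp only: mm_add_left mm_add_right matrix_mul_lid matrix_mul_rid scaleR_2 add.assoc)
  also have "2 *\<^sub>R R = ?E - R ** R"
  proof -
    have "?E - R ** R = 2 *\<^sub>R ((1/2) *\<^sub>R (?E - R ** R))" by simp
    then show ?thesis using R(2) unfolding f_def by simp
  qed
  finally have "(mat 1 + R) ** (mat 1 + R) = A" by simp
  then show ?thesis using R(1) by (auto simp: Sset_def)
qed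

lemma msqrt_near:
  fixes A :: "real^'n^'n"
  assumes sA: "transpose A = A" and nA: "norm (A - mat 1) \<le> 1/4"
  shows "spd (msqrt A)" "msqrt A ** msqrt A = A" "\<And>v. inner v (msqrt A *v v) \<ge> 1/2 * (norm v)\<^sup>2"
    "transpose (msqrt A) = msqrt A"
proof -
  obtain R where R: "transpose R = R" "norm R \<le> 1/2" "(mat 1 + R) ** (mat 1 + R) = A"
    using sqrt_exists[OF assms] by blast
  let ?S = "mat 1 + R"
  have low: "inner v (?S *v v) \<ge> 1/2 * (norm v)\<^sup>2" for v
  proof -
    have "\<bar>inner v (R *v v)\<bar> \<le> norm R * (norm v)\<^sup>2" by (rule quad_bound)
    also have "\<dots> \<le> 1/2 * (norm v)\<^sup>2" using R(2) by (intro mult_right_mono) auto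
    finally have "inner v (R *v v) \<ge> - (1/2 * (norm v)\<^sup>2)" by linarith
    moreover have "inner v (?S *v v) = (norm v)\<^sup>2 + inner v (R *v v)"
      by (simp add: matrix_vector_mult_add_rdistrib inner_add_right power2_norm_eq_inner)
    ultimately show ?thesis by linarith
  qed
  have spdS: "spd ?S" unfolding spd_def
  proof (intro conjI allI impI)
    show "transpose ?S = ?S" using R(1) by (simp add: transpose_add)
    fix v :: "real^'n" assume "v \<noteq> 0"
    then have "1/2 * (norm v)\<^sup>2 > 0" by simp
    then show "inner v (?S *v v) > 0" using low[of v] by linarith
  qed
  have "msqrt A = ?S" unfolding msqrt_def
  proof (rule the_equality)
    show "spd ?S \<and> ?S ** ?S = A" using spdS R(3) by blast
    fix T assume "spd T \<and> T ** T = A"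
    then show "T = ?S" using spd_unique[of T ?S] spdS R(3) by metis
  qed
  then show "spd (msqrt A)" "msqrt A ** msqrt A = A" "\<And>v. inner v (msqrt A *v v) \<ge> 1/2 * (norm v)\<^sup>2"
    "transpose (msqrt A) = msqrt A"
    using spdS R(3) low unfolding spd_def by simp_all
qed



definition Ob :: "'x::real_normed_vector \<Rightarrow> ('x \<Rightarrow> 'b::real_normed_vector) \<Rightarrow> bool" where
  "Ob x0 f \<longleftrightarrow> (\<exists>C\<ge>0. eventually (\<lambda>x. norm (f x) \<le> C) (nhds x0))"
definition O1 :: "'x::real_normed_vector \<Rightarrow> ('x \<Rightarrow> 'b::real_normed_vector) \<Rightarrow> bool" where
  "O1 x0 f \<longleftrightarrow> (\<exists>C\<ge>0. eventually (\<lambda>x. norm (f x) \<le> C * norm (x - x0)) (nhds x0))"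
definition O2 :: "'x::real_normed_vector \<Rightarrow> ('x \<Rightarrow> 'b::real_normed_vector) \<Rightarrow> bool" where
  "O2 x0 f \<longleftrightarrow> (\<exists>C\<ge>0. eventually (\<lambda>x. norm (f x) \<le> C * (norm (x - x0))\<^sup>2) (nhds x0))"

lemma ev_near: "d > 0 \<Longrightarrow> eventually (\<lambda>x. norm (x - x0) < d) (nhds x0)"
  using eventually_nhds_metric[of _ x0] by (auto simp: dist_norm)

lemma O2_add: "O2 x0 f \<Longrightarrow> O2 x0 g \<Longrightarrow> O2 x0 (\<lambda>x. f x + g x)"
  unfolding O2_def
proof (elim exE conjE)
  fix C D assume "C \<ge> 0" "D \<ge> 0" and e: "eventually (\<lambda>x. norm (f x) \<le> C * (norm (x - x0))\<^sup>2) (nhds x0)"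
    "eventually (\<lambda>x. norm (g x) \<le> D * (norm (x - x0))\<^sup>2) (nhds x0)"
  show "\<exists>C\<ge>0. \<forall>\<^sub>F x in nhds x0. norm (f x + g x) \<le> C * (norm (x - x0))\<^sup>2"
  proof (rule exI[of _ "C + D"], intro conjI)
    show "C + D \<ge> 0" using \<open>C \<ge> 0\<close> \<open>D \<ge> 0\<close> by simp
    show "\<forall>\<^sub>F x in nhds x0. norm (f x + g x) \<le> (C + D) * (norm (x - x0))\<^sup>2"
      using eventually_conj[OF e]
    proof (rule eventually_mono)
      fix x assume a: "norm (f x) \<le> C * (norm (x - x0))\<^sup>2 \<and> norm (g x) \<le> D * (norm (x - x0))\<^sup>2"
      have "norm (f x + g x) \<le> norm (f x) + norm (g x)" by (rule norm_triangle_ineq)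
      moreover have "(C + D) * (norm (x - x0))\<^sup>2 = C * (norm (x - x0))\<^sup>2 + D * (norm (x - x0))\<^sup>2" by (rule distrib_right)
      ultimately show "norm (f x + g x) \<le> (C + D) * (norm (x - x0))\<^sup>2" using a by linarith
    qed
  qed
qed

lemma O2_minus: "O2 x0 f \<Longrightarrow> O2 x0 (\<lambda>x. - f x)"
  unfolding O2_def by simp

lemma O2_diff: "O2 x0 f \<Longrightarrow> O2 x0 g \<Longrightarrow> O2 x0 (\<lambda>x. f x - g x)"
  using O2_add[of x0 f "\<lambda>x. - g x"] O2_minus[of x0 g] by simp

lemma O1_add: "O1 x0 f \<Longrightarrow> O1 x0 g \<Longrightarrow> O1 x0 (\<lambda>x. f x + g x)"
  unfolding O1_def
proof (elim exE conjE)
  fix C D assume "C \<ge> 0" "D \<ge> 0" and e: "eventually (\<lambda>x. norm (f x) \<le> C * norm (x - x0)) (nhds x0)"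
    "eventually (\<lambda>x. norm (g x) \<le> D * norm (x - x0)) (nhds x0)"
  show "\<exists>C\<ge>0. \<forall>\<^sub>F x in nhds x0. norm (f x + g x) \<le> C * norm (x - x0)"
  proof (rule exI[of _ "C + D"], intro conjI)
    show "C + D \<ge> 0" using \<open>C \<ge> 0\<close> \<open>D \<ge> 0\<close> by simp
    show "\<forall>\<^sub>F x in nhds x0. norm (f x + g x) \<le> (C + D) * norm (x - x0)"
      using eventually_conj[OF e]
    proof (rule eventually_mono)
      fix x assume a: "norm (f x) \<le> C * norm (x - x0) \<and> norm (g x) \<le> D * norm (x - x0)"
      have "norm (f x + g x) \<le> norm (f x) + norm (g x)" by (rule norm_triangle_ineq)
      moreover have "(C + D) * norm (x - x0) = C * norm (x - x0) + D * norm (x - x0)" by (rule distrib_right)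
      ultimately show "norm (f x + g x) \<le> (C + D) * norm (x - x0)" using a by linarith
    qed
  qed
qed

lemma O1_minus: "O1 x0 f \<Longrightarrow> O1 x0 (\<lambda>x. - f x)"
  unfolding O1_def by simp

lemma O1_diff: "O1 x0 f \<Longrightarrow> O1 x0 g \<Longrightarrow> O1 x0 (\<lambda>x. f x - g x)"
  using O1_add[of x0 f "\<lambda>x. - g x"] O1_minus[of x0 g] by simp

lemma O2_O1: "O2 x0 f \<Longrightarrow> O1 x0 f"
  unfolding O2_def O1_def
proof (elim exE conjE)
  fix C assume C: "C \<ge> 0" and e: "eventually (\<lambda>x. norm (f x) \<le> C * (norm (x - x0))\<^sup>2) (nhds x0)"
  have "eventually (\<lambda>x. norm (f x) \<le> C * norm (x - x0)) (nhds x0)"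
    using eventually_conj[OF e ev_near[OF zero_less_one]]
  proof (rule eventually_mono)
    fix x assume a: "norm (f x) \<le> C * (norm (x - x0))\<^sup>2 \<and> norm (x - x0) < 1"
    have "C * (norm (x - x0))\<^sup>2 \<le> C * norm (x - x0)"
      using a C by (intro mult_left_mono) (auto simp: power2_eq_square intro!: mult_left_le_one_le)
    then show "norm (f x) \<le> C * norm (x - x0)" using a by linarith
  qed
  then show "\<exists>C\<ge>0. \<forall>\<^sub>F x in nhds x0. norm (f x) \<le> C * norm (x - x0)" using C by blast
qed

lemma O1_Ob: "O1 x0 f \<Longrightarrow> Ob x0 f"
  unfolding Ob_def O1_def
proof (elim exE conjE)
  fix C assume C: "C \<ge> 0" and e: "eventually (\<lambda>x. norm (f x) \<le> C * norm (x - x0)) (nhds x0)"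
  have "eventually (\<lambda>x. norm (f x) \<le> C) (nhds x0)"
    using eventually_conj[OF e ev_near[OF zero_less_one]]
  proof (rule eventually_mono)
    fix x assume a: "norm (f x) \<le> C * norm (x - x0) \<and> norm (x - x0) < 1"
    have "C * norm (x - x0) \<le> C * 1" using a C by (intro mult_left_mono) auto
    then show "norm (f x) \<le> C" using a by linarith
  qed
  then show "\<exists>C\<ge>0. \<forall>\<^sub>F x in nhds x0. norm (f x) \<le> C" using C by blast
qed

lemma O1_small: "O1 x0 f \<Longrightarrow> e > 0 \<Longrightarrow> eventually (\<lambda>x. norm (f x) \<le> e) (nhds x0)"
  unfolding O1_def
proof (elim exE conjE)
  fix C assume C: "C \<ge> 0" and ev: "eventually (\<lambda>x. norm (f x) \<le> C * norm (x - x0)) (nhds x0)" and e: "e > 0"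
  have "e / (C + 1) > 0" using C e by simp
  show "eventually (\<lambda>x. norm (f x) \<le> e) (nhds x0)"
    using eventually_conj[OF ev ev_near[OF \<open>e / (C + 1) > 0\<close>, of x0]]
  proof (rule eventually_mono)
    fix x assume a: "norm (f x) \<le> C * norm (x - x0) \<and> norm (x - x0) < e / (C + 1)"
    have "C * norm (x - x0) \<le> (C + 1) * norm (x - x0)" by (simp add: algebra_simps)
    also have "\<dots> \<le> (C + 1) * (e / (C + 1))" using a C by (intro mult_left_mono) auto
    also have "\<dots> = e" using C by simp
    finally show "norm (f x) \<le> e" using a by linarith
  qed
qed

lemma Ob_const: "Ob x0 (\<lambda>x. c)"
  unfolding Ob_def by (rule exI[of _ "norm c"]) auto

lemma Ob_ev: "(\<exists>C\<ge>0. eventually (\<lambda>x. norm (f x) \<le> C) (nhds x0)) \<Longrightarrow> Ob x0 f"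
  by (simp add: Ob_def)

lemma O2_cong: "O2 x0 f \<Longrightarrow> eventually (\<lambda>x. f x = g x) (nhds x0) \<Longrightarrow> O2 x0 g"
  unfolding O2_def
  by (elim exE conjE, rule_tac x=C in exI) (auto elim: eventually_mono[OF eventually_conj])

lemma O1_cong: "O1 x0 f \<Longrightarrow> eventually (\<lambda>x. f x = g x) (nhds x0) \<Longrightarrow> O1 x0 g"
  unfolding O1_def
  by (elim exE conjE, rule_tac x=C in exI) (auto elim: eventually_mono[OF eventually_conj])

lemma prod_gen:
  assumes "eventually (\<lambda>x. norm (f x) \<le> a x) F" "eventually (\<lambda>x. norm (g x) \<le> b x) F"
  shows "eventually (\<lambda>x. norm ((f x::real^'a^'b) ** (g x::real^'c^'a)) \<le> a x * b x) F"
  using eventually_conj[OF assms]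
  by (rule eventually_mono) (meson mult_mono norm_ge_zero order_trans norm_mm)

lemma mm_Ob_O2:
  assumes "Ob x0 f" "O2 x0 g"
  shows "O2 x0 (\<lambda>x. (f x::real^'a^'b) ** (g x::real^'c^'a))"
proof -
  obtain C where C: "C \<ge> 0" "eventually (\<lambda>x. norm (f x) \<le> C * 1) (nhds x0)"
    using assms(1) unfolding Ob_def by auto
  obtain D where D: "D \<ge> 0" "eventually (\<lambda>x. norm (g x) \<le> D * (norm (x - x0))\<^sup>2) (nhds x0)"
    using assms(2) unfolding O2_def by auto
  have "eventually (\<lambda>x. norm (f x ** g x) \<le> (C * 1) * (D * (norm (x - x0))\<^sup>2)) (nhds x0)"
    by (rule prod_gen[OF C(2) D(2)])
  then have "eventually (\<lambda>x. norm (f x ** g x) \<le> (C * D) * (norm (x - x0))\<^sup>2) (nhds x0)"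
    by (rule eventually_mono) (simp add: mult_ac power2_eq_square)
  then show ?thesis unfolding O2_def using C(1) D(1) by (intro exI[of _ "C * D"]) simp
qed

lemma mm_O2_Ob:
  assumes "O2 x0 f" "Ob x0 g"
  shows "O2 x0 (\<lambda>x. (f x::real^'a^'b) ** (g x::real^'c^'a))"
proof -
  obtain C where C: "C \<ge> 0" "eventually (\<lambda>x. norm (f x) \<le> C * (norm (x - x0))\<^sup>2) (nhds x0)"
    using assms(1) unfolding O2_def by auto
  obtain D where D: "D \<ge> 0" "eventually (\<lambda>x. norm (g x) \<le> D * 1) (nhds x0)"
    using assms(2) unfolding Ob_def by auto
  have "eventually (\<lambda>x. norm (f x ** g x) \<le> (C * (norm (x - x0))\<^sup>2) * (D * 1)) (nhds x0)"
    by (rule prod_gen[OF C(2) D(2)])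
  then have "eventually (\<lambda>x. norm (f x ** g x) \<le> (C * D) * (norm (x - x0))\<^sup>2) (nhds x0)"
    by (rule eventually_mono) (simp add: mult_ac power2_eq_square)
  then show ?thesis unfolding O2_def using C(1) D(1) by (intro exI[of _ "C * D"]) simp
qed

lemma mm_O1_O1:
  assumes "O1 x0 f" "O1 x0 g"
  shows "O2 x0 (\<lambda>x. (f x::real^'a^'b) ** (g x::real^'c^'a))"
proof -
  obtain C where C: "C \<ge> 0" "eventually (\<lambda>x. norm (f x) \<le> C * norm (x - x0)) (nhds x0)"
    using assms(1) unfolding O1_def by auto
  obtain D where D: "D \<ge> 0" "eventually (\<lambda>x. norm (g x) \<le> D * norm (x - x0)) (nhds x0)"
    using assms(2) unfolding O1_def by auto
  have "eventually (\<lambda>x. norm (f x ** g x) \<le> (C * norm (x - x0)) * (D * norm (x - x0))) (nhds x0)"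
    by (rule prod_gen[OF C(2) D(2)])
  then have "eventually (\<lambda>x. norm (f x ** g x) \<le> (C * D) * (norm (x - x0))\<^sup>2) (nhds x0)"
    by (rule eventually_mono) (simp add: mult_ac power2_eq_square)
  then show ?thesis unfolding O2_def using C(1) D(1) by (intro exI[of _ "C * D"]) simp
qed

lemma mm_Ob_O1:
  assumes "Ob x0 f" "O1 x0 g"
  shows "O1 x0 (\<lambda>x. (f x::real^'a^'b) ** (g x::real^'c^'a))"
proof -
  obtain C where C: "C \<ge> 0" "eventually (\<lambda>x. norm (f x) \<le> C * 1) (nhds x0)"
    using assms(1) unfolding Ob_def by auto
  obtain D where D: "D \<ge> 0" "eventually (\<lambda>x. norm (g x) \<le> D * norm (x - x0)) (nhds x0)"
    using assms(2) unfolding O1_def by auto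
  have "eventually (\<lambda>x. norm (f x ** g x) \<le> (C * 1) * (D * norm (x - x0))) (nhds x0)"
    by (rule prod_gen[OF C(2) D(2)])
  then have "eventually (\<lambda>x. norm (f x ** g x) \<le> (C * D) * norm (x - x0)) (nhds x0)"
    by (rule eventually_mono) (simp add: mult_ac power2_eq_square)
  then show ?thesis unfolding O1_def using C(1) D(1) by (intro exI[of _ "C * D"]) simp
qed

lemma mm_O1_Ob:
  assumes "O1 x0 f" "Ob x0 g"
  shows "O1 x0 (\<lambda>x. (f x::real^'a^'b) ** (g x::real^'c^'a))"
proof -
  obtain C where C: "C \<ge> 0" "eventually (\<lambda>x. norm (f x) \<le> C * norm (x - x0)) (nhds x0)"
    using assms(1) unfolding O1_def by auto
  obtain D where D: "D \<ge> 0" "eventually (\<lambda>x. norm (g x) \<le> D * 1) (nhds x0)"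
    using assms(2) unfolding Ob_def by auto
  have "eventually (\<lambda>x. norm (f x ** g x) \<le> (C * norm (x - x0)) * (D * 1)) (nhds x0)"
    by (rule prod_gen[OF C(2) D(2)])
  then have "eventually (\<lambda>x. norm (f x ** g x) \<le> (C * D) * norm (x - x0)) (nhds x0)"
    by (rule eventually_mono) (simp add: mult_ac power2_eq_square)
  then show ?thesis unfolding O1_def using C(1) D(1) by (intro exI[of _ "C * D"]) simp
qed

lemma mm_Ob_Ob:
  assumes "Ob x0 f" "Ob x0 g"
  shows "Ob x0 (\<lambda>x. (f x::real^'a^'b) ** (g x::real^'c^'a))"
proof -
  obtain C where C: "C \<ge> 0" "eventually (\<lambda>x. norm (f x) \<le> C * 1) (nhds x0)"
    using assms(1) unfolding Ob_def by auto
  obtain D where D: "D \<ge> 0" "eventually (\<lambda>x. norm (g x) \<le> D * 1) (nhds x0)"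
    using assms(2) unfolding Ob_def by auto
  have "eventually (\<lambda>x. norm (f x ** g x) \<le> (C * 1) * (D * 1)) (nhds x0)"
    by (rule prod_gen[OF C(2) D(2)])
  then have "eventually (\<lambda>x. norm (f x ** g x) \<le> (C * D) * 1) (nhds x0)"
    by (rule eventually_mono) (simp add: mult_ac power2_eq_square)
  then show ?thesis unfolding Ob_def using C(1) D(1) by (intro exI[of _ "C * D"]) simp
qed



lemma taylor1:
  fixes f :: "real^'l \<Rightarrow> 'a::real_normed_vector"
  assumes "C2 f"
  shows "O2 x0 (\<lambda>x. f x - f x0 - frechet_derivative f (at x0) (x - x0))"
proof -
  obtain D :: "real^'l \<Rightarrow> ((real^'l) \<Rightarrow>\<^sub>L 'a)" and D2 :: "real^'l \<Rightarrow> ((real^'l) \<Rightarrow>\<^sub>L ((real^'l) \<Rightarrow>\<^sub>L 'a))"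
    where dD: "\<And>x. (f has_derivative blinfun_apply (D x)) (at x)"
      and dD2: "\<And>x. (D has_derivative blinfun_apply (D2 x)) (at x)"
    using assms unfolding C2_def by blast
  have fd: "frechet_derivative f (at x0) = blinfun_apply (D x0)"
    using frechet_derivative_at[OF dD[of x0]] by simp
  obtain d where d: "d > 0" and dd: "\<And>y. norm (y - x0) < d \<Longrightarrow>
      norm (D y - D x0 - blinfun_apply (D2 x0) (y - x0)) \<le> 1 * norm (y - x0)"
    using dD2[of x0] unfolding has_derivative_at_alt by (meson zero_less_one)
  define L where "L = norm (D2 x0) + 1"
  have L0: "L \<ge> 0" unfolding L_def by simp
  have Dlip: "norm (D y - D x0) \<le> L * norm (y - x0)" if "norm (y - x0) < d" for y
  proof -
    have "norm (D y - D x0) \<le> norm (D y - D x0 - blinfun_apply (D2 x0) (y - x0)) + norm (blinfun_apply (D2 x0) (y - x0))"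
      using norm_triangle_ineq[of "D y - D x0 - blinfun_apply (D2 x0) (y - x0)" "blinfun_apply (D2 x0) (y - x0)"] by simp
    also have "\<dots> \<le> 1 * norm (y - x0) + norm (D2 x0) * norm (y - x0)"
      by (rule add_mono[OF dd[OF that] norm_blinfun])
    finally show ?thesis by (simp add: L_def algebra_simps)
  qed
  define g where "g y = f y - blinfun_apply (D x0) (y - x0)" for y
  have main: "norm (g x - g x0) \<le> L * (norm (x - x0))\<^sup>2" if x: "norm (x - x0) < d" for x
  proof -
    define r where "r = norm (x - x0)"
    have "norm (g x - g x0) \<le> (L * r) * norm (x - x0)"
    proof (rule differentiable_bound[where S="cball x0 r" and f'="\<lambda>y. blinfun_apply (D y - D x0)"])
      show "convex (cball x0 r)" by simp
      show "x \<in> cball x0 r" "x0 \<in> cball x0 r" by (auto simp: r_def dist_norm norm_minus_commute)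
      fix y assume y: "y \<in> cball x0 r"
      have "(g has_derivative (\<lambda>h. blinfun_apply (D y) h - blinfun_apply (D x0) h)) (at y)"
        unfolding g_def by (auto intro!: derivative_eq_intros dD)
      then show "(g has_derivative blinfun_apply (D y - D x0)) (at y within cball x0 r)"
      proof -
        have "blinfun_apply (D y - D x0) = (\<lambda>h. blinfun_apply (D y) h - blinfun_apply (D x0) h)"
          by (rule ext) (simp add: blinfun.diff_left)
        then show ?thesis using \<open>(g has_derivative _) (at y)\<close> by (simp add: has_derivative_at_withinI)
      qed
      have ny: "norm (y - x0) \<le> r" using y by (simp add: dist_norm norm_minus_commute)
      have "onorm (blinfun_apply (D y - D x0)) = norm (D y - D x0)" by (simp add: norm_blinfun.rep_eq)
      also have "\<dots> \<le> L * norm (y - x0)" using Dlip ny x r_def by simp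
      also have "\<dots> \<le> L * r" using ny L0 by (simp add: mult_left_mono)
      finally show "onorm (blinfun_apply (D y - D x0)) \<le> L * r" .
    qed
    then show ?thesis by (simp add: r_def power2_eq_square mult_ac)
  qed
  have "eventually (\<lambda>x. norm (f x - f x0 - frechet_derivative f (at x0) (x - x0)) \<le> L * (norm (x - x0))\<^sup>2) (nhds x0)"
    using ev_near[OF d, of x0] by (rule eventually_mono) (use main in \<open>simp add: g_def fd algebra_simps\<close>)
  then show ?thesis unfolding O2_def using L0 by blast
qed

lemma fd_expand:
  fixes f :: "real^'l \<Rightarrow> 'a::real_normed_vector"
  assumes "C2 f"
  shows "frechet_derivative f (at x0) h = (\<Sum>j\<in>UNIV. (h $ j) *\<^sub>R pderiv_at f j x0)"
proof -
  obtain D :: "real^'l \<Rightarrow> ((real^'l) \<Rightarrow>\<^sub>L 'a)"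
    where dD: "\<And>x. (f has_derivative blinfun_apply (D x)) (at x)"
    using assms unfolding C2_def by blast
  have fd: "frechet_derivative f (at x0) = blinfun_apply (D x0)"
    using frechet_derivative_at[OF dD[of x0]] by simp
  have "h = (\<Sum>j\<in>UNIV. (h $ j) *\<^sub>R axis j 1)"
    using basis_expansion[of h] by (simp add: scalar_mult_eq_scaleR)
  then have "blinfun_apply (D x0) h = blinfun_apply (D x0) (\<Sum>j\<in>UNIV. (h $ j) *\<^sub>R axis j 1)" by simp
  also have "\<dots> = (\<Sum>j\<in>UNIV. (h $ j) *\<^sub>R blinfun_apply (D x0) (axis j 1))"
    by (simp add: blinfun.sum_right blinfun.scaleR_right)
  finally show ?thesis by (simp add: fd pderiv_at_def)
qed

lemma fd_O1:
  fixes f :: "real^'l \<Rightarrow> 'a::real_normed_vector"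
  assumes "C2 f"
  shows "O1 x0 (\<lambda>x. frechet_derivative f (at x0) (x - x0))"
proof -
  obtain D :: "real^'l \<Rightarrow> ((real^'l) \<Rightarrow>\<^sub>L 'a)"
    where dD: "\<And>x. (f has_derivative blinfun_apply (D x)) (at x)"
    using assms unfolding C2_def by blast
  have fd: "frechet_derivative f (at x0) = blinfun_apply (D x0)"
    using frechet_derivative_at[OF dD[of x0]] by simp
  show ?thesis unfolding O1_def fd
    by (rule exI[of _ "norm (D x0)"]) (auto intro!: always_eventually norm_blinfun)
qed

lemma C2_O1:
  fixes f :: "real^'l \<Rightarrow> 'a::real_normed_vector"
  assumes "C2 f"
  shows "O1 x0 (\<lambda>x. f x - f x0)"
proof -
  have "O1 x0 (\<lambda>x. (f x - f x0 - frechet_derivative f (at x0) (x - x0)) + frechet_derivative f (at x0) (x - x0))"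
    by (rule O1_add[OF O2_O1[OF taylor1[OF assms]] fd_O1[OF assms]])
  then show ?thesis by simp
qed

lemma pderiv_sym:
  fixes f :: "real^'l \<Rightarrow> real^'n^'n"
  assumes sym: "\<And>x. transpose (f x) = f x" and "C2 f"
  shows "transpose (pderiv_at f j x0) = pderiv_at f j x0"
proof -
  obtain D :: "real^'l \<Rightarrow> ((real^'l) \<Rightarrow>\<^sub>L (real^'n^'n))"
    where dD: "\<And>x. (f has_derivative blinfun_apply (D x)) (at x)"
    using assms unfolding C2_def by blast
  have fd: "frechet_derivative f (at x0) = blinfun_apply (D x0)"
    using frechet_derivative_at[OF dD[of x0]] by simp
  have "((\<lambda>x. transpose (f x)) has_derivative (\<lambda>h. transpose (blinfun_apply (D x0) h))) (at x0)"
    by (rule bounded_linear.has_derivative[OF bl_transpose dD])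
  then have "(f has_derivative (\<lambda>h. transpose (blinfun_apply (D x0) h))) (at x0)" using sym by simp
  then have "(\<lambda>h. transpose (blinfun_apply (D x0) h)) = blinfun_apply (D x0)"
    using dD[of x0] has_derivative_unique by blast
  then show ?thesis unfolding pderiv_at_def fd by metis
qed

lemma O1_linsum:
  fixes W :: "'l::finite \<Rightarrow> 'a::real_normed_vector"
  shows "O1 x0 (\<lambda>x. \<Sum>j\<in>UNIV. ((x::real^'l) $ j - x0 $ j) *\<^sub>R W j)"
proof -
  have "norm (\<Sum>j\<in>UNIV. (x $ j - x0 $ j) *\<^sub>R W j) \<le> (\<Sum>j\<in>UNIV. norm (W j)) * norm (x - x0)" for x
  proof -
    have "norm (\<Sum>j\<in>UNIV. (x $ j - x0 $ j) *\<^sub>R W j) \<le> (\<Sum>j\<in>UNIV. norm ((x $ j - x0 $ j) *\<^sub>R W j))"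
      by (rule norm_sum)
    also have "\<dots> \<le> (\<Sum>j\<in>UNIV. norm (x - x0) * norm (W j))"
    proof (rule sum_mono)
      fix j
      have "\<bar>x $ j - x0 $ j\<bar> \<le> norm (x - x0)" using component_le_norm_cart[of "x - x0" j] by simp
      then show "norm ((x $ j - x0 $ j) *\<^sub>R W j) \<le> norm (x - x0) * norm (W j)"
        by (simp add: mult_right_mono)
    qed
    finally show ?thesis by (simp add: sum_distrib_left mult_ac)
  qed
  then show ?thesis unfolding O1_def by (intro exI[of _ "\<Sum>j\<in>UNIV. norm (W j)"]) (auto intro: sum_nonneg)
qed



lemmas mmx = mm_diff_left mm_diff_right mm_add_left mm_add_right matrix_mul_assoc

lemma alg_MKM:
  fixes M M0 Ki K0i AM AK :: "real^'n^'n"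
  shows "M ** Ki ** M - M0 ** K0i ** M0 - (AM ** K0i ** M0 - M0 ** K0i ** AK ** K0i ** M0 + M0 ** K0i ** AM)
  = (M - M0 - AM) ** K0i ** M0 + M0 ** (Ki - K0i + K0i ** AK ** K0i) ** M0 + M0 ** K0i ** (M - M0 - AM)
   + (M - M0) ** (Ki - K0i) ** M0 + (M - M0) ** K0i ** (M - M0) + M0 ** (Ki - K0i) ** (M - M0)
   + (M - M0) ** (Ki - K0i) ** (M - M0)"
  by (simp add: mmx algebra_simps)

lemma alg_E1:
  fixes K K0 Ki K0i AK :: "real^'n^'n"
  assumes "K0i ** (K - K0) ** Ki = K0i - Ki"
  shows "Ki - K0i + K0i ** AK ** K0i = - (K0i ** (K - K0 - AK) ** K0i) - K0i ** (K - K0) ** (Ki - K0i)"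
proof -
  have "- (K0i ** (K - K0 - AK) ** K0i) - K0i ** (K - K0) ** (Ki - K0i)
      = K0i ** AK ** K0i - K0i ** (K - K0) ** Ki"
    by (simp add: mmx algebra_simps)
  then show ?thesis using assms by simp
qed

lemma alg_Kinv:
  fixes K K0 Ki K0i :: "real^'n^'n"
  assumes "K ** Ki = mat 1" "K0i ** K0 = mat 1"
  shows "K0i ** (K - K0) ** Ki = K0i - Ki"
proof -
  have "K0i ** (K - K0) ** Ki = K0i ** (K ** Ki) - (K0i ** K0) ** Ki"
    by (simp add: mmx)
  then show ?thesis using assms by simp
qed

lemma alg_isq:
  fixes S T X Y :: "real^'n^'n"
  assumes "X ** S = mat 1" "T ** Y = mat 1"
  shows "X - Y = X ** (T - S) ** Y"
proof -
  have "X ** (T - S) ** Y = X ** (T ** Y) - (X ** S) ** Y" by (simp add: mmx)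
  then show ?thesis using assms by simp
qed

lemma alg_final:
  fixes iZ iZh Tm :: "real^'m^'m" and Ut :: "real^'n^'m" and U :: "real^'m^'n" and P Q R :: "real^'n^'n"
  assumes "Tm = Ut ** R ** U"
  shows "iZ ** (Ut ** P ** U) ** iZ - (iZh ** Tm ** iZh + iZ ** (Ut ** Q ** U) ** iZ)
    = iZ ** (Ut ** (P - Q - R) ** U) ** iZ + ((iZ - iZh) ** Tm ** iZ + iZh ** Tm ** (iZ - iZh))"
  unfolding assms by (simp add: mmx algebra_simps)



lemma O2_dom:
  assumes "O2 x0 b" "K \<ge> 0" "eventually (\<lambda>x. norm (a x) \<le> K * norm (b x)) (nhds x0)"
  shows "O2 x0 a"
proof -
  obtain C where C: "C \<ge> 0" "eventually (\<lambda>x. norm (b x) \<le> C * (norm (x - x0))\<^sup>2) (nhds x0)"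
    using assms(1) unfolding O2_def by auto
  have "eventually (\<lambda>x. norm (a x) \<le> (K * C) * (norm (x - x0))\<^sup>2) (nhds x0)"
    using eventually_conj[OF assms(3) C(2)]
  proof (rule eventually_mono)
    fix x assume a: "norm (a x) \<le> K * norm (b x) \<and> norm (b x) \<le> C * (norm (x - x0))\<^sup>2"
    then have "K * norm (b x) \<le> K * (C * (norm (x - x0))\<^sup>2)" using assms(2) by (intro mult_left_mono) auto
    then show "norm (a x) \<le> (K * C) * (norm (x - x0))\<^sup>2" using a by (simp add: mult_ac)
  qed
  then show ?thesis unfolding O2_def using assms(2) C(1) by (intro exI[of _ "K * C"]) simp
qed

lemma isq:
  fixes A :: "real^'m^'m"
  assumes "transpose A = A" "norm (A - mat 1) \<le> 1/4"
  shows "isqrt A ** msqrt A = mat 1" "msqrt A ** isqrt A = mat 1" "transpose (isqrt A) = isqrt A"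
    "norm (isqrt A) \<le> 2 * real CARD('m)" "\<And>v. inner v (msqrt A *v v) \<ge> 1/2 * (norm v)\<^sup>2"
    "transpose (msqrt A) = msqrt A" "msqrt A ** msqrt A = A"
proof -
  note m = msqrt_near[OF assms]
  have half: "(0::real) < 1/2" by simp
  note ib = inv_bound[OF half m(3) m(4)]
  show "isqrt A ** msqrt A = mat 1" "msqrt A ** isqrt A = mat 1"
    using inv_facts[OF ib(1)] by (simp_all add: isqrt_def)
  show "transpose (isqrt A) = isqrt A" using ib(2) by (simp add: isqrt_def)
  show "norm (isqrt A) \<le> 2 * real CARD('m)" using ib(3) by (simp add: isqrt_def)
  show "\<And>v. inner v (msqrt A *v v) \<ge> 1/2 * (norm v)\<^sup>2" "transpose (msqrt A) = msqrt A"
    "msqrt A ** msqrt A = A" using m by auto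
qed

lemma spd_near:
  fixes A :: "real^'m^'m"
  assumes "transpose A = A" "norm (A - mat 1) \<le> 1/4"
  shows "spd A"
  unfolding spd_def
proof (intro conjI allI impI)
  show "transpose A = A" by fact
  fix v :: "real^'m" assume "v \<noteq> 0"
  have "\<bar>inner v ((A - mat 1) *v v)\<bar> \<le> norm (A - mat 1) * (norm v)\<^sup>2" by (rule quad_bound)
  also have "\<dots> \<le> 1/4 * (norm v)\<^sup>2" using assms(2) by (intro mult_right_mono) auto
  finally have "inner v ((A - mat 1) *v v) \<ge> - (1/4 * (norm v)\<^sup>2)" by linarith
  moreover have "inner v (A *v v) = (norm v)\<^sup>2 + inner v ((A - mat 1) *v v)"
    by (simp add: matrix_vector_mult_diff_rdistrib inner_diff_right power2_norm_eq_inner)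
  moreover have "(norm v)\<^sup>2 > 0" using \<open>v \<noteq> 0\<close> by simp
  ultimately show "inner v (A *v v) > 0" by linarith
qed

theorem lemma3:
  fixes K M :: "real^'l \<Rightarrow> real^'n^'n"
    and x0 :: "real^'l"
    and U :: "real^'m^'n"
  assumes K_spd: "\<And>x. spd (K x)"
    and M_spd: "\<And>x. spd (M x)"
    and K_C2: "C2 K"
    and M_C2: "C2 M"
    and U_orth: "transpose U ** M x0 ** U = mat 1"
  defines "K0 \<equiv> K x0"
    and "M0 \<equiv> M x0"
  defines "Z \<equiv> (\<lambda>x. transpose U ** M x ** U)"
  defines "Um0 \<equiv> (\<lambda>x. U ** isqrt (Z x))"
  defines "F0 \<equiv> (\<lambda>x. transpose (Um0 x) ** M x ** matrix_inv (K x) ** M x ** Um0 x)"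
  defines "Tm \<equiv> transpose U ** M0 ** matrix_inv K0 ** M0 ** U"
  defines "Zhat \<equiv> (\<lambda>x. mat 1 + (\<Sum>j\<in>UNIV. (x $ j - x0 $ j) *\<^sub>R
                         (transpose U ** pderiv_at M j x0 ** U)))"
  defines "G \<equiv> (\<lambda>j. pderiv_at M j x0 ** matrix_inv K0 ** M0
                     - M0 ** matrix_inv K0 ** pderiv_at K j x0 ** matrix_inv K0 ** M0
                     + M0 ** matrix_inv K0 ** pderiv_at M j x0)"
  defines "Ghat \<equiv> (\<lambda>j x. isqrt (Z x) ** (transpose U ** G j ** U) ** isqrt (Z x))"
  defines "Fm0 \<equiv> (\<lambda>x. isqrt (Zhat x) ** Tm ** isqrt (Zhat x)
                     + (\<Sum>j\<in>UNIV. (x $ j - x0 $ j) *\<^sub>R Ghat j x))"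
  shows "\<exists>N C. open N \<and> x0 \<in> N \<and> (\<forall>x\<in>N. spd (Z x) \<and> spd (Zhat x)) \<and>
           (\<forall>x\<in>N. norm (F0 x - Fm0 x) \<le> C * (norm (x - x0))\<^sup>2)"
proof -
  let ?Ut = "transpose U"
  have sM: "\<And>x. transpose (M x) = M x" using M_spd unfolding spd_def by blast
  have sK: "\<And>x. transpose (K x) = K x" using K_spd unfolding spd_def by blast
  have Kinv: "\<And>x. invertible (K x)" using K_spd unfolding spd_def by (blast intro: pos_invertible)
  define Ki where "Ki x = matrix_inv (K x)" for x
  define K0i where "K0i = matrix_inv K0"
  have KKi: "\<And>x. K x ** Ki x = mat 1" using inv_facts(1)[OF Kinv] by (simp add: Ki_def)
  have K0iK0: "K0i ** K0 = mat 1" using inv_facts(2)[OF Kinv] by (simp add: K0i_def K0_def)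
  define dM where "dM j = pderiv_at M j x0" for j
  define dK where "dK j = pderiv_at K j x0" for j
  define AM where "AM x = (\<Sum>j\<in>UNIV. (x $ j - x0 $ j) *\<^sub>R dM j)" for x
  define AK where "AK x = (\<Sum>j\<in>UNIV. (x $ j - x0 $ j) *\<^sub>R dK j)" for x
  have AM_fd: "AM x = frechet_derivative M (at x0) (x - x0)" for x
    by (simp add: fd_expand[OF M_C2] AM_def dM_def)
  have AK_fd: "AK x = frechet_derivative K (at x0) (x - x0)" for x
    by (simp add: fd_expand[OF K_C2] AK_def dK_def)
  have TM: "O2 x0 (\<lambda>x. M x - M0 - AM x)" using taylor1[OF M_C2, of x0] by (simp add: AM_fd M0_def)
  have TK: "O2 x0 (\<lambda>x. K x - K0 - AK x)" using taylor1[OF K_C2, of x0] by (simp add: AK_fd K0_def)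
  have M1: "O1 x0 (\<lambda>x. M x - M0)" using C2_O1[OF M_C2, of x0] by (simp add: M0_def)
  have K1: "O1 x0 (\<lambda>x. K x - K0)" using C2_O1[OF K_C2, of x0] by (simp add: K0_def)

  have Zsym: "\<And>x. transpose (Z x) = Z x"
    by (simp add: Z_def matrix_transpose_mul sM matrix_mul_assoc)
  have Uinj: "v = 0" if "U *v v = 0" for v
  proof -
    have "v = (?Ut ** M0 ** U) *v v" using U_orth by (simp add: M0_def)
    also have "\<dots> = (?Ut ** M0) *v (U *v v)" by (simp add: matrix_vector_mul_assoc)
    finally show ?thesis using that by simp
  qed
  have Zspd: "\<And>x. spd (Z x)"
    unfolding spd_def
  proof (intro allI conjI impI)
    fix x show "transpose (Z x) = Z x" by (rule Zsym)
    fix v :: "real^'m" assume "v \<noteq> 0"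
    then have "U *v v \<noteq> 0" using Uinj by blast
    then have "inner (U *v v) (M x *v (U *v v)) > 0" using M_spd unfolding spd_def by blast
    moreover have "inner v (Z x *v v) = inner (U *v v) (M x *v (U *v v))"
    proof -
      have "Z x *v v = ?Ut *v (M x *v (U *v v))" by (simp add: Z_def matrix_vector_mul_assoc matrix_mul_assoc)
      then show ?thesis using inner_mv_transpose[of v ?Ut "M x *v (U *v v)"] by simp
    qed
    ultimately show "inner v (Z x *v v) > 0" by simp
  qed
  define W where "W j = ?Ut ** dM j ** U" for j
  have Zhat_W: "Zhat x = mat 1 + (\<Sum>j\<in>UNIV. (x $ j - x0 $ j) *\<^sub>R W j)" for x
    by (simp add: Zhat_def W_def dM_def)
  have ZhO1: "O1 x0 (\<lambda>x. Zhat x - mat 1)"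
    unfolding Zhat_W by (simp add: O1_linsum)
  have ZZh: "Z x - Zhat x = ?Ut ** (M x - M0 - AM x) ** U" for x
    using U_orth
    by (simp add: Z_def Zhat_def AM_def dM_def M0_def mmx mm_sum_left mm_sum_right mm_scale_left mm_scale_right)
  have ZZhO2: "O2 x0 (\<lambda>x. Z x - Zhat x)"
    unfolding ZZh by (rule mm_O2_Ob[OF mm_Ob_O2[OF Ob_const TM] Ob_const])
  have ZO1: "O1 x0 (\<lambda>x. Z x - mat 1)"
    using O1_add[OF O2_O1[OF ZZhO2] ZhO1] by simp
  have Wsym: "transpose (W j) = W j" for j
    using pderiv_sym[OF sM M_C2, of j x0] by (simp add: W_def dM_def matrix_transpose_mul matrix_mul_assoc)
  have Zhsym: "transpose (Zhat x) = Zhat x" for x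
    unfolding Zhat_W by (simp add: transpose_add transpose_sum transpose_scalar Wsym)
  have ev1: "eventually (\<lambda>x. norm (Z x - mat 1) \<le> 1/4 \<and> norm (Zhat x - mat 1) \<le> 1/4) (nhds x0)"
    by (intro eventually_conj O1_small[OF ZO1] O1_small[OF ZhO1]) auto

  let ?c = "2 * real CARD('m)"
  have iZOb: "Ob x0 (\<lambda>x. isqrt (Z x))"
  proof (rule Ob_ev, rule exI[of _ ?c], intro conjI)
    show "?c \<ge> 0" by simp
    show "eventually (\<lambda>x. norm (isqrt (Z x)) \<le> ?c) (nhds x0)"
      using ev1 by (rule eventually_mono) (rule isq(4)[OF Zsym], erule conjunct1)
  qed
  have iZhOb: "Ob x0 (\<lambda>x. isqrt (Zhat x))"
  proof (rule Ob_ev, rule exI[of _ ?c], intro conjI)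
    show "?c \<ge> 0" by simp
    show "eventually (\<lambda>x. norm (isqrt (Zhat x)) \<le> ?c) (nhds x0)"
      using ev1 by (rule eventually_mono) (rule isq(4)[OF Zhsym], erule conjunct2)
  qed
  have dI: "O2 x0 (\<lambda>x. isqrt (Z x) - isqrt (Zhat x))"
  proof (rule O2_dom[OF ZZhO2, of "?c * ?c"])
    show "?c * ?c \<ge> 0" by simp
    show "eventually (\<lambda>x. norm (isqrt (Z x) - isqrt (Zhat x)) \<le> ?c * ?c * norm (Z x - Zhat x)) (nhds x0)"
      using ev1
    proof (rule eventually_mono)
      fix x assume a: "norm (Z x - mat 1) \<le> 1/4 \<and> norm (Zhat x - mat 1) \<le> 1/4"
      note A = isq[OF Zsym a[THEN conjunct1]] and B = isq[OF Zhsym a[THEN conjunct2]]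
      have eq: "isqrt (Z x) - isqrt (Zhat x) = isqrt (Z x) ** (msqrt (Zhat x) - msqrt (Z x)) ** isqrt (Zhat x)"
        by (rule alg_isq[OF A(1) B(2)])
      have l: "2 * (1/2) * norm (msqrt (Z x) - msqrt (Zhat x)) \<le> norm (msqrt (Z x) ** msqrt (Z x) - msqrt (Zhat x) ** msqrt (Zhat x))"
        by (rule sqrt_lip[OF A(6) B(6) A(5) B(5)])
      then have l2: "norm (msqrt (Zhat x) - msqrt (Z x)) \<le> norm (Z x - Zhat x)"
        using A(7) B(7) by (simp add: norm_minus_commute)
      have "norm (isqrt (Z x) - isqrt (Zhat x)) \<le> norm (isqrt (Z x) ** (msqrt (Zhat x) - msqrt (Z x))) * norm (isqrt (Zhat x))"
        unfolding eq by (rule norm_mm)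
      also have "\<dots> \<le> (norm (isqrt (Z x)) * norm (msqrt (Zhat x) - msqrt (Z x))) * norm (isqrt (Zhat x))"
        by (intro mult_right_mono norm_mm) auto
      also have "\<dots> \<le> (?c * norm (Z x - Zhat x)) * ?c"
        by (intro mult_mono A(4) B(4) l2) auto
      finally show "norm (isqrt (Z x) - isqrt (Zhat x)) \<le> ?c * ?c * norm (Z x - Zhat x)"
        by (simp add: mult_ac)
    qed
  qed

  have Kid: "K0i ** (K x - K0) ** Ki x = K0i - Ki x" for x by (rule alg_Kinv[OF KKi K0iK0])
  have KiOb: "Ob x0 Ki"
  proof -
    define e where "e = 1 / (2 * (norm K0i + 1))"
    have e0: "e > 0" unfolding e_def by (simp add: add_nonneg_pos)
    have pn: "2 * (norm K0i + 1) > 0" by (simp add: add_nonneg_pos)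
    have "norm K0i * e = norm K0i / (2 * (norm K0i + 1))" by (simp add: e_def)
    also have "\<dots> \<le> 1/2" using pn by (subst pos_divide_le_eq) (auto simp: algebra_simps)
    finally have ke: "norm K0i * e \<le> 1/2" .
    have "eventually (\<lambda>x. norm (Ki x) \<le> 2 * norm K0i) (nhds x0)"
      using O1_small[OF K1 e0]
    proof (rule eventually_mono)
      fix x assume ne: "norm (K x - K0) \<le> e"
      have "Ki x = K0i - K0i ** (K x - K0) ** Ki x" using Kid[of x] by simp
      then have "norm (Ki x) \<le> norm K0i + norm (K0i ** (K x - K0) ** Ki x)"
        by (metis norm_triangle_ineq4)
      also have "norm (K0i ** (K x - K0) ** Ki x) \<le> (norm K0i * norm (K x - K0)) * norm (Ki x)"
        by (rule order_trans[OF norm_mm]) (intro mult_right_mono norm_mm; simp)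
      also have "(norm K0i * norm (K x - K0)) * norm (Ki x) \<le> (1/2) * norm (Ki x)"
        using ne ke by (intro mult_right_mono order_trans[OF mult_left_mono[OF ne]]) auto
      finally show "norm (Ki x) \<le> 2 * norm K0i" by simp
    qed
    then show ?thesis by (intro Ob_ev exI[of _ "2 * norm K0i"]) auto
  qed
  have N1: "O1 x0 (\<lambda>x. Ki x - K0i)"
  proof -
    have "O1 x0 (\<lambda>x. - (K0i ** (K x - K0) ** Ki x))"
      by (rule O1_minus[OF mm_O1_Ob[OF mm_Ob_O1[OF Ob_const K1] KiOb]])
    then show ?thesis using Kid by simp
  qed
  have E1: "O2 x0 (\<lambda>x. Ki x - K0i + K0i ** AK x ** K0i)"
  proof -
    have "O2 x0 (\<lambda>x. - (K0i ** (K x - K0 - AK x) ** K0i) - K0i ** (K x - K0) ** (Ki x - K0i))"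
      by (rule O2_diff[OF O2_minus[OF mm_O2_Ob[OF mm_Ob_O2[OF Ob_const TK] Ob_const]]
            mm_O1_O1[OF mm_Ob_O1[OF Ob_const K1] N1]])
    then show ?thesis using alg_E1[OF Kid] by simp
  qed
  have MKM: "O2 x0 (\<lambda>x. M x ** Ki x ** M x - M0 ** K0i ** M0 - (AM x ** K0i ** M0 - M0 ** K0i ** AK x ** K0i ** M0 + M0 ** K0i ** AM x))"
  proof -
    have t1: "O2 x0 (\<lambda>x. (M x - M0 - AM x) ** K0i ** M0)" by (rule mm_O2_Ob[OF mm_O2_Ob[OF TM Ob_const] Ob_const])
    have t2: "O2 x0 (\<lambda>x. M0 ** (Ki x - K0i + K0i ** AK x ** K0i) ** M0)" by (rule mm_O2_Ob[OF mm_Ob_O2[OF Ob_const E1] Ob_const])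
    have t3: "O2 x0 (\<lambda>x. M0 ** K0i ** (M x - M0 - AM x))" by (rule mm_Ob_O2[OF mm_Ob_Ob[OF Ob_const Ob_const] TM])
    have t4: "O2 x0 (\<lambda>x. (M x - M0) ** (Ki x - K0i) ** M0)" by (rule mm_O2_Ob[OF mm_O1_O1[OF M1 N1] Ob_const])
    have t5: "O2 x0 (\<lambda>x. (M x - M0) ** K0i ** (M x - M0))" by (rule mm_O1_O1[OF mm_O1_Ob[OF M1 Ob_const] M1])
    have t6: "O2 x0 (\<lambda>x. M0 ** (Ki x - K0i) ** (M x - M0))" by (rule mm_O1_O1[OF mm_Ob_O1[OF Ob_const N1] M1])
    have t7: "O2 x0 (\<lambda>x. (M x - M0) ** (Ki x - K0i) ** (M x - M0))" by (rule mm_O2_Ob[OF mm_O1_O1[OF M1 N1] O1_Ob[OF M1]])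
    show ?thesis unfolding alg_MKM
      by (intro O2_add t1 t2 t3 t4 t5 t6 t7)
  qed
  have GH: "(\<Sum>j\<in>UNIV. (x $ j - x0 $ j) *\<^sub>R G j) = AM x ** K0i ** M0 - M0 ** K0i ** AK x ** K0i ** M0 + M0 ** K0i ** AM x" for x
    by (simp add: G_def AM_def AK_def dM_def dK_def K0i_def scaleR_diff_right scaleR_add_right sum.distrib
        sum_subtractf mm_sum_left mm_sum_right mm_scale_left mm_scale_right)

  let ?GS = "\<lambda>x. (\<Sum>j\<in>UNIV. (x $ j - x0 $ j) *\<^sub>R G j)"
  have Tm_eq: "Tm = ?Ut ** (M0 ** K0i ** M0) ** U" by (simp add: Tm_def K0i_def matrix_mul_assoc)
  have F0_eq: "F0 x = isqrt (Z x) ** (?Ut ** (M x ** Ki x ** M x) ** U) ** isqrt (Z x)"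
    if "transpose (isqrt (Z x)) = isqrt (Z x)" for x
    using that by (simp add: F0_def Um0_def Ki_def matrix_transpose_mul matrix_mul_assoc)
  have Fm0_eq: "Fm0 x = isqrt (Zhat x) ** Tm ** isqrt (Zhat x) + isqrt (Z x) ** (?Ut ** ?GS x ** U) ** isqrt (Z x)" for x
    by (simp add: Fm0_def Ghat_def mm_sum_left mm_sum_right mm_scale_left mm_scale_right matrix_mul_assoc)
  have big: "O2 x0 (\<lambda>x. isqrt (Z x) ** (?Ut ** (M x ** Ki x ** M x - ?GS x - M0 ** K0i ** M0) ** U) ** isqrt (Z x)
      + ((isqrt (Z x) - isqrt (Zhat x)) ** Tm ** isqrt (Z x) + isqrt (Zhat x) ** Tm ** (isqrt (Z x) - isqrt (Zhat x))))"
  proof -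
    have "O2 x0 (\<lambda>x. M x ** Ki x ** M x - ?GS x - M0 ** K0i ** M0)"
      using MKM unfolding GH by (simp add: algebra_simps)
    then have a: "O2 x0 (\<lambda>x. isqrt (Z x) ** (?Ut ** (M x ** Ki x ** M x - ?GS x - M0 ** K0i ** M0) ** U) ** isqrt (Z x))"
      by (intro mm_O2_Ob[OF mm_Ob_O2[OF iZOb mm_O2_Ob[OF mm_Ob_O2[OF Ob_const]]] iZOb] Ob_const)
    have b: "O2 x0 (\<lambda>x. (isqrt (Z x) - isqrt (Zhat x)) ** Tm ** isqrt (Z x))"
      by (rule mm_O2_Ob[OF mm_O2_Ob[OF dI Ob_const] iZOb])
    have c: "O2 x0 (\<lambda>x. isqrt (Zhat x) ** Tm ** (isqrt (Z x) - isqrt (Zhat x)))"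
      by (rule mm_Ob_O2[OF mm_Ob_Ob[OF iZhOb Ob_const] dI])
    show ?thesis by (intro O2_add a b c)
  qed
  have FO2: "O2 x0 (\<lambda>x. F0 x - Fm0 x)"
  proof (rule O2_cong[OF big])
    show "eventually (\<lambda>x. isqrt (Z x) ** (?Ut ** (M x ** Ki x ** M x - ?GS x - M0 ** K0i ** M0) ** U) ** isqrt (Z x)
      + ((isqrt (Z x) - isqrt (Zhat x)) ** Tm ** isqrt (Z x) + isqrt (Zhat x) ** Tm ** (isqrt (Z x) - isqrt (Zhat x)))
      = F0 x - Fm0 x) (nhds x0)"
      using ev1
    proof (rule eventually_mono)
      fix x assume a: "norm (Z x - mat 1) \<le> 1/4 \<and> norm (Zhat x - mat 1) \<le> 1/4"
      have s: "transpose (isqrt (Z x)) = isqrt (Z x)" by (rule isq(3)[OF Zsym a[THEN conjunct1]])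
      show "isqrt (Z x) ** (?Ut ** (M x ** Ki x ** M x - ?GS x - M0 ** K0i ** M0) ** U) ** isqrt (Z x)
      + ((isqrt (Z x) - isqrt (Zhat x)) ** Tm ** isqrt (Z x) + isqrt (Zhat x) ** Tm ** (isqrt (Z x) - isqrt (Zhat x)))
      = F0 x - Fm0 x"
        unfolding F0_eq[OF s] Fm0_eq by (rule alg_final[OF Tm_eq, symmetric])
    qed
  qed
  obtain C where C: "C \<ge> 0" "eventually (\<lambda>x. norm (F0 x - Fm0 x) \<le> C * (norm (x - x0))\<^sup>2) (nhds x0)"
    using FO2 unfolding O2_def by auto
  have "eventually (\<lambda>x. spd (Zhat x) \<and> norm (F0 x - Fm0 x) \<le> C * (norm (x - x0))\<^sup>2) (nhds x0)"
    using eventually_conj[OF ev1 C(2)] by (rule eventually_mono) (auto intro: spd_near Zhsym)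
  then obtain N where N: "open N" "x0 \<in> N" "\<forall>x\<in>N. spd (Zhat x) \<and> norm (F0 x - Fm0 x) \<le> C * (norm (x - x0))\<^sup>2"
    unfolding eventually_nhds by blast
  show ?thesis using N Zspd by blast
qed


end
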